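(* Let $\mathbb{X}$ be a $0$-dimensional Polish space, $(C^\varepsilon_i)_{(\varepsilon,i)\in2\times\omega}$ a comparing $1$-disjoint family of subsets of $\mathbb{X}$, $X$ a Polish space and $A\subseteq X\times X$ any relation. Then one of the following holds: (a) there is $c:X\to\omega$ with all $c^{-1}(\{n\})\in\mathbf{\Delta}^0_2(X)$ and $c(x)\neq c(y)$ for all $(x,y)\in A$; (b) there is a continuous $f:\mathbb{X}\to X$ with $(f(x),f(y))\in A$ for all $(x,y)\in\bigcup_iC^0_i\times C^1_i$.
   Context: A family $(C^\varepsilon_i)_{(\varepsilon,i)\in2\times\omega}$ of subsets of $\mathbb{X}$ is $1$-disjoint if its members are closed and pairwise disjoint. It is comparing if for each $q\in\omega$ there is a partition $(O^p_q)_{p\in\omega}$ of $\mathbb{X}$ into clopen sets such that for each $i$: if $q<i$ there is $p$ with $C^0_i\cup C^1_i\subseteq O^p_q$; and if $q\ge i$ then $C^\varepsilon_i\subseteq O^{2i+\varepsilon}_q$ for each $\varepsilon\in2$. *)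

theory Defs
  imports "HOL-Analysis.Analysis"
begin

definition Polish_space :: "'a topology \<Rightarrow> bool" where
  "Polish_space X \<longleftrightarrow> completely_metrizable_space X \<and> separable_space X"

text \<open>Families indexed by (eps, i) in 2 x omega, eps encoded as a natural number 0 or 1.\<close>
definition one_disjoint :: "'a topology \<Rightarrow> (nat \<Rightarrow> nat \<Rightarrow> 'a set) \<Rightarrow> bool" where
  "one_disjoint XX C \<longleftrightarrow>
     (\<forall>e<2. \<forall>i. closedin XX (C e i)) \<and>
     (\<forall>e<2. \<forall>i. \<forall>e'<2. \<forall>i'. (e, i) \<noteq> (e', i') \<longrightarrow> C e i \<inter> C e' i' = {})"

definition comparing :: "'a topology \<Rightarrow> (nat \<Rightarrow> nat \<Rightarrow> 'a set) \<Rightarrow> bool" where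
  "comparing XX C \<longleftrightarrow>
     (\<forall>q::nat. \<exists>Op :: nat \<Rightarrow> 'a set.
        (\<forall>p. openin XX (Op p) \<and> closedin XX (Op p)) \<and>
        (\<forall>p p'. p \<noteq> p' \<longrightarrow> Op p \<inter> Op p' = {}) \<and>
        (\<Union>p. Op p) = topspace XX \<and>
        (\<forall>i. (q < i \<longrightarrow> (\<exists>p. C 0 i \<union> C 1 i \<subseteq> Op p)) \<and>
             (i \<le> q \<longrightarrow> (\<forall>e<2. C e i \<subseteq> Op (2 * i + e)))))"

definition Delta02_in :: "'a topology \<Rightarrow> 'a set \<Rightarrow> bool" where
  "Delta02_in X S \<longleftrightarrow> fsigma_in X S \<and> gdelta_in X S"

end

theory Submission
  imports Defs
begin


lemma D02_open: "metrizable_space X \<Longrightarrow> openin X U \<Longrightarrow> Delta02_in X U"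
  by (simp add: Delta02_in_def open_imp_fsigma_in open_imp_gdelta_in)

lemma D02_closed: "metrizable_space X \<Longrightarrow> closedin X U \<Longrightarrow> Delta02_in X U"
  by (simp add: Delta02_in_def closed_imp_fsigma_in closed_imp_gdelta_in)

lemma D02_Int: "Delta02_in X S \<Longrightarrow> Delta02_in X T \<Longrightarrow> Delta02_in X (S \<inter> T)"
  by (simp add: Delta02_in_def fsigma_in_Int gdelta_in_Int)

lemma sep_metr_base:
  assumes "metrizable_space X" "separable_space X"
  shows "\<exists>B. countable B \<and> (\<forall>V\<in>B. openin X V) \<and>
             (\<forall>U x. openin X U \<and> x \<in> U \<longrightarrow> (\<exists>V\<in>B. x \<in> V \<and> V \<subseteq> U))"
proof -
  obtain M d where "Metric_space M d" and Xeq: "X = Metric_space.mtopology M d"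
    using assms(1) metrizable_space_def by blast
  then interpret M: Metric_space M d by blast
  obtain D where D: "countable D" "D \<subseteq> M" "M.mtopology closure_of D = M"
    using assms(2) unfolding separable_space_def Xeq by auto
  define B where "B = (\<lambda>(c,n). M.mball c (inverse (Suc n))) ` (D \<times> (UNIV::nat set))"
  have "countable B" unfolding B_def using D(1) by auto
  moreover have "\<forall>V\<in>B. openin X V" unfolding B_def Xeq by auto
  moreover have "\<exists>V\<in>B. x \<in> V \<and> V \<subseteq> U" if oUX: "openin X U" and xU: "x \<in> U" for U x
  proof -
    have oU: "openin M.mtopology U" using oUX Xeq by simp
    have xM: "x \<in> M" using oU xU M.openin_mtopology by blast
    obtain r where r: "r > 0" "M.mball x r \<subseteq> U"
      using oU xU unfolding M.openin_mtopology by blast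
    obtain n::nat where n: "inverse (Suc n) < r/2"
      using r(1) using reals_Archimedean[of "r/2"] by auto
    have "x \<in> M.mtopology closure_of D" using D(3) xM by simp
    then have "\<forall>r>0. \<exists>y\<in>D. y \<in> M.mball x r" unfolding M.metric_closure_of by blast
    moreover have "(0::real) < inverse (Suc n)" by simp
    ultimately obtain c where c: "c \<in> D" "c \<in> M.mball x (inverse (Suc n))"
      by blast
    have cM: "c \<in> M" using c by auto
    have "x \<in> M.mball c (inverse (Suc n))" using c xM by (auto simp: M.commute)
    moreover have "M.mball c (inverse (Suc n)) \<subseteq> M.mball x r"
      apply (rule M.mball_subset) using c n xM by (auto simp: M.commute)
    moreover have "M.mball c (inverse (Suc n)) \<in> B" unfolding B_def using c(1) by auto
    ultimately show ?thesis using r by blast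
  qed
  ultimately show ?thesis by blast
qed

definition goodset :: "'b topology \<Rightarrow> ('b \<times> 'b) set \<Rightarrow> 'b set \<Rightarrow> bool" where
  "goodset X A U \<longleftrightarrow> (\<exists>c::'b \<Rightarrow> nat. (\<forall>n. Delta02_in X {x \<in> U. c x = n}) \<and>
       (\<forall>(x,y)\<in>A. x \<in> U \<longrightarrow> y \<in> U \<longrightarrow> c x \<noteq> c y))"

lemma goodset_mono:
  fixes X :: "'b topology"
  assumes "metrizable_space X" "goodset X A U" "openin X V" "V \<subseteq> U"
  shows "goodset X A V"
proof -
  obtain c :: "'b \<Rightarrow> nat" where c: "\<forall>n. Delta02_in X {x \<in> U. c x = n}"
      "\<forall>(x,y)\<in>A. x \<in> U \<longrightarrow> y \<in> U \<longrightarrow> c x \<noteq> c y"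
    using assms(2) unfolding goodset_def by blast
  have "{x \<in> V. c x = n} = V \<inter> {x \<in> U. c x = n}" for n using assms(4) by auto
  then have "Delta02_in X {x \<in> V. c x = n}" for n
    using D02_Int D02_open assms(1,3) c(1) by metis
  moreover have "\<forall>(x,y)\<in>A. x \<in> V \<longrightarrow> y \<in> V \<longrightarrow> c x \<noteq> c y" using c(2) assms(4) by blast
  ultimately show ?thesis unfolding goodset_def by blast
qed

lemma coloring_or_kernel:
  assumes met: "metrizable_space X" and sep: "separable_space X"
    and AX: "A \<subseteq> topspace X \<times> topspace X"
  shows "(\<exists>c :: 'b \<Rightarrow> nat. (\<forall>n. Delta02_in X {x \<in> topspace X. c x = n}) \<and>
            (\<forall>(x, y) \<in> A. c x \<noteq> c y))
     \<or> (\<exists>F. F \<subseteq> topspace X \<and> F \<noteq> {} \<and>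
           (\<forall>x\<in>F. \<forall>U. openin X U \<and> x \<in> U \<longrightarrow> (\<exists>(a,b)\<in>A. a \<in> U \<inter> F \<and> b \<in> U \<inter> F)))"
proof -
  obtain B where B: "countable B" "\<forall>V\<in>B. openin X V"
     "\<forall>U x. openin X U \<and> x \<in> U \<longrightarrow> (\<exists>V\<in>B. x \<in> V \<and> V \<subseteq> U)"
    using sep_metr_base[OF met sep] by blast
  define B' where "B' = {V\<in>B. goodset X A V} \<union> {{}}"
  have cB': "countable B'" "B' \<noteq> {}" unfolding B'_def using B(1) by auto
  define \<beta> where "\<beta> = from_nat_into B'"
  have rb: "range \<beta> = B'" unfolding \<beta>_def using cB' by (simp add: range_from_nat_into)
  have egood: "goodset X A {}" unfolding goodset_def by (auto simp: Delta02_in_def)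
  have bB': "\<beta> n \<in> B'" for n using rb by blast
  have bopen: "openin X (\<beta> n)" for n
    using bB'[of n] B(2) unfolding B'_def by auto
  have bgood: "goodset X A (\<beta> n)" for n
    using bB'[of n] egood unfolding B'_def by auto
  define G where "G = (\<Union>n. \<beta> n)"
  have Gopen: "openin X G" unfolding G_def using bopen by blast
  have Gtop: "G \<subseteq> topspace X" by (rule openin_subset[OF Gopen])
  have inG: "x \<in> G" if oU: "openin X U" and gU: "goodset X A U" and xU: "x \<in> U" for U x
  proof -
    obtain V where V: "V \<in> B" "x \<in> V" "V \<subseteq> U" using B(3) oU xU by blast
    have "goodset X A V" using goodset_mono[OF met gU] V B(2) by blast
    then have "V \<in> range \<beta>" using rb V(1) unfolding B'_def by blast
    then show ?thesis using V(2) unfolding G_def by blast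
  qed
  obtain cc :: "nat \<Rightarrow> 'b \<Rightarrow> nat" where cc: "\<And>n k. Delta02_in X {x \<in> \<beta> n. cc n x = k}"
     "\<And>n x y. (x,y) \<in> A \<Longrightarrow> x \<in> \<beta> n \<Longrightarrow> y \<in> \<beta> n \<Longrightarrow> cc n x \<noteq> cc n y"
  proof -
    have "\<forall>n. \<exists>c::'b\<Rightarrow>nat. (\<forall>k. Delta02_in X {x \<in> \<beta> n. c x = k}) \<and>
       (\<forall>(x,y)\<in>A. x \<in> \<beta> n \<longrightarrow> y \<in> \<beta> n \<longrightarrow> c x \<noteq> c y)"
      using bgood unfolding goodset_def by blast
    from choice[OF this] obtain cc :: "nat \<Rightarrow> 'b \<Rightarrow> nat" where "\<forall>n. (\<forall>k. Delta02_in X {x \<in> \<beta> n. cc n x = k}) \<and>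
       (\<forall>(x,y)\<in>A. x \<in> \<beta> n \<longrightarrow> y \<in> \<beta> n \<longrightarrow> cc n x \<noteq> cc n y)"
      by blast
    then show ?thesis using that by blast
  qed
  define L where "L x = (LEAST n. x \<in> \<beta> n)" for x
  define cG where "cG x = prod_encode (L x, cc (L x) x)" for x
  have Lin: "x \<in> \<beta> (L x)" if "x \<in> G" for x
    using that unfolding G_def L_def by (auto intro: LeastI)
  have Lmin: "x \<notin> \<beta> j" if "j < L x" for x j
    using that unfolding L_def using not_less_Least by blast
  have classG: "Delta02_in X {x \<in> G. cG x = k}" for k
  proof -
    obtain n m where nm: "prod_decode k = (n, m)" by (cases "prod_decode k")
    have k: "k = prod_encode (n, m)" using nm by (metis prod_decode_inverse)
    have L1: "x \<in> \<beta> n \<and> (\<forall>j<n. x \<notin> \<beta> j)" if "x \<in> G" "L x = n" for x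
      using Lin Lmin that by blast
    have L2: "L x = n" if "x \<in> \<beta> n" "\<forall>j<n. x \<notin> \<beta> j" for x
      unfolding L_def
    proof (rule Least_equality)
      show "x \<in> \<beta> n" by (rule that(1))
      show "n \<le> y" if "x \<in> \<beta> y" for y using that \<open>\<forall>j<n. x \<notin> \<beta> j\<close> not_le by blast
    qed
    have "{x \<in> G. cG x = k} = {x \<in> \<beta> n. cc n x = m} \<inter> (topspace X - (\<Union>j\<in>{..<n}. \<beta> j))"
    proof (intro set_eqI iffI)
      fix x assume "x \<in> {x \<in> G. cG x = k}"
      then have "x \<in> G" "L x = n" "cc (L x) x = m" unfolding cG_def k by (auto simp: prod_encode_eq)
      then show "x \<in> {x \<in> \<beta> n. cc n x = m} \<inter> (topspace X - (\<Union>j\<in>{..<n}. \<beta> j))"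
        using L1 Gtop by auto
    next
      fix x assume x: "x \<in> {x \<in> \<beta> n. cc n x = m} \<inter> (topspace X - (\<Union>j\<in>{..<n}. \<beta> j))"
      then have "L x = n" using L2 by auto
      moreover have "x \<in> G" using x unfolding G_def by auto
      ultimately show "x \<in> {x \<in> G. cG x = k}" using x unfolding cG_def k by auto
    qed
    moreover have "openin X (\<Union>j\<in>{..<n}. \<beta> j)"
      by (rule openin_Union) (auto simp: bopen)
    then have "closedin X (topspace X - (\<Union>j\<in>{..<n}. \<beta> j))"
      by (rule closedin_diff[OF closedin_topspace])
    ultimately show ?thesis using D02_Int[OF cc(1) D02_closed[OF met]] by simp
  qed
  have edgeG: "cG x \<noteq> cG y" if "(x,y) \<in> A" "x \<in> G" "y \<in> G" for x y
  proof
    assume "cG x = cG y"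
    then have "L x = L y" "cc (L x) x = cc (L y) y" unfolding cG_def by (auto simp: prod_encode_eq)
    then show False using cc(2)[OF that(1) Lin[OF that(2)]] Lin[OF that(3)] by simp
  qed
  have goodG: "goodset X A G" unfolding goodset_def using classG edgeG by blast
  define F where "F = topspace X - G"
  show ?thesis
  proof (cases "F = {}")
    case True
    then have "G = topspace X" using Gtop F_def by blast
    then have "(\<forall>n. Delta02_in X {x \<in> topspace X. cG x = n}) \<and> (\<forall>(x, y) \<in> A. cG x \<noteq> cG y)"
      using classG edgeG AX by (simp add: subset_iff)  (blast)
    then show ?thesis by (intro disjI1 exI[of _ cG])
  next
    case False
    have "\<exists>(a,b)\<in>A. a \<in> U \<inter> F \<and> b \<in> U \<inter> F" if x: "x \<in> F" and U: "openin X U" "x \<in> U" for x U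
    proof (rule ccontr)
      assume noedge: "\<not> (\<exists>(a,b)\<in>A. a \<in> U \<inter> F \<and> b \<in> U \<inter> F)"
      define c where "c y = (if y \<in> G then Suc (cG y) else 0)" for y
      have UX: "U \<subseteq> topspace X" using U openin_subset by blast
      have "Delta02_in X {y \<in> U. c y = k}" for k
      proof (cases k)
        case 0
        then have "{y \<in> U. c y = k} = U \<inter> (topspace X - G)" using UX unfolding c_def by auto
        moreover have "closedin X (topspace X - G)" by (rule closedin_diff[OF closedin_topspace Gopen])
        ultimately show ?thesis using D02_Int[OF D02_open[OF met U(1)] D02_closed[OF met]] by simp
      next
        case (Suc k')
        then have "{y \<in> U. c y = k} = U \<inter> {y \<in> G. cG y = k'}" unfolding c_def by auto
        then show ?thesis using D02_Int[OF D02_open[OF met U(1)] classG] by simp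
      qed
      moreover have "\<forall>(y,z)\<in>A. y \<in> U \<longrightarrow> z \<in> U \<longrightarrow> c y \<noteq> c z"
      proof (clarify)
        fix y z assume yz: "(y,z) \<in> A" "y \<in> U" "z \<in> U" "c y = c z"
        show False
        proof (cases "y \<in> G")
          case True
          then show ?thesis using yz edgeG unfolding c_def by (auto split: if_splits)
        next
          case False
          then have "z \<notin> G" using yz unfolding c_def by (auto split: if_splits)
          then show ?thesis using False yz noedge UX AX unfolding F_def by blast
        qed
      qed
      ultimately have "goodset X A U" unfolding goodset_def by blast
      then have "x \<in> G" using inG U by blast
      then show False using x F_def by blast
    qed
    moreover have "F \<subseteq> topspace X" unfolding F_def by blast
    ultimately show ?thesis using False by (intro disjI2 exI[of _ F]) blast
  qed
qed



definition sameidx :: "(nat \<Rightarrow> nat \<Rightarrow> 'a set) \<Rightarrow> nat \<Rightarrow> 'a \<Rightarrow> 'a \<Rightarrow> bool" where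
  "sameidx Q q x y \<longleftrightarrow> (\<forall>r<q. \<forall>p. x \<in> Q r p \<longleftrightarrow> y \<in> Q r p)"

lemma sameidx_Suc: "sameidx Q (Suc q) x y \<longleftrightarrow> sameidx Q q x y \<and> (\<forall>p. x \<in> Q q p \<longleftrightarrow> y \<in> Q q p)"
  unfolding sameidx_def using less_Suc_eq by auto

lemma sameidx_refl: "sameidx Q q x x" unfolding sameidx_def by auto

lemma sameidx_trans: "sameidx Q q x y \<Longrightarrow> sameidx Q q x s = sameidx Q q y s"
  unfolding sameidx_def by auto

lemma build_hom:
  fixes XX :: "'a topology" and C :: "nat \<Rightarrow> nat \<Rightarrow> 'a set" and A :: "('b \<times> 'b) set"
  assumes ms: "Metric_space M d" and mc: "Metric_space.mcomplete M d"
    and comp: "comparing XX C"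
    and FM: "F \<subseteq> M" and Fne: "F \<noteq> {}"
    and PF: "\<forall>x\<in>F. \<forall>U. openin (Metric_space.mtopology M d) U \<and> x \<in> U \<longrightarrow>
               (\<exists>(a,b)\<in>A. a \<in> U \<inter> F \<and> b \<in> U \<inter> F)"
  shows "\<exists>f. continuous_map XX (Metric_space.mtopology M d) f \<and>
            (\<forall>i. \<forall>x\<in>C 0 i. \<forall>y\<in>C 1 i. (f x, f y) \<in> A)"
proof -
  interpret M: Metric_space M d by (rule ms)
  have "\<forall>q. \<exists>Op :: nat \<Rightarrow> 'a set.
        (\<forall>p. openin XX (Op p) \<and> closedin XX (Op p)) \<and>
        (\<forall>p p'. p \<noteq> p' \<longrightarrow> Op p \<inter> Op p' = {}) \<and>
        (\<Union>p. Op p) = topspace XX \<and>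
        (\<forall>i. (q < i \<longrightarrow> (\<exists>p. C 0 i \<union> C 1 i \<subseteq> Op p)) \<and>
             (i \<le> q \<longrightarrow> (\<forall>e<2. C e i \<subseteq> Op (2 * i + e))))"
    using comp unfolding comparing_def .
  from choice[OF this] obtain Q :: "nat \<Rightarrow> nat \<Rightarrow> 'a set" where Q: "\<forall>q.
        (\<forall>p. openin XX (Q q p) \<and> closedin XX (Q q p)) \<and>
        (\<forall>p p'. p \<noteq> p' \<longrightarrow> Q q p \<inter> Q q p' = {}) \<and>
        (\<Union>p. Q q p) = topspace XX \<and>
        (\<forall>i. (q < i \<longrightarrow> (\<exists>p. C 0 i \<union> C 1 i \<subseteq> Q q p)) \<and>
             (i \<le> q \<longrightarrow> (\<forall>e<2. C e i \<subseteq> Q q (2 * i + e))))"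
    by (elim exE) (erule that)
  note Qq = spec[OF Q]
  have Oopen: "openin XX (Q q p)" for q p using conjunct1[OF spec[OF conjunct1[OF Qq]]] .
  have Odisj: "p \<noteq> p' \<Longrightarrow> Q q p \<inter> Q q p' = {}" for q p p'
    using conjunct1[OF conjunct2[OF Qq]] by blast
  have Ocov: "(\<Union>p. Q q p) = topspace XX" for q using conjunct1[OF conjunct2[OF conjunct2[OF Qq]]] .
  have O4: "\<forall>i. (q < i \<longrightarrow> (\<exists>p. C 0 i \<union> C 1 i \<subseteq> Q q p)) \<and>
             (i \<le> q \<longrightarrow> (\<forall>e<2. C e i \<subseteq> Q q (2 * i + e)))" for q
    using conjunct2[OF conjunct2[OF conjunct2[OF Qq]]] .
  have Obig: "q < i \<Longrightarrow> \<exists>p. C 0 i \<union> C 1 i \<subseteq> Q q p" for q i using conjunct1[OF spec[OF O4]] by blast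
  have Osmall: "i \<le> q \<Longrightarrow> e < 2 \<Longrightarrow> C e i \<subseteq> Q q (2 * i + e)" for q i e
    using conjunct2[OF spec[OF O4]] by blast
  have same_C: "sameidx Q q x y" if "x \<in> C 0 q \<union> C 1 q" "y \<in> C 0 q \<union> C 1 q" for q x y
    unfolding sameidx_def
  proof (intro allI impI)
    fix r p assume "r < q"
    then obtain p0 where p0: "C 0 q \<union> C 1 q \<subseteq> Q r p0" using Obig by blast
    show "x \<in> Q r p \<longleftrightarrow> y \<in> Q r p"
    proof (cases "p = p0")
      case True then show ?thesis using p0 that by blast
    next
      case False then show ?thesis using p0 that Odisj[OF False, of r] by blast
    qed
  qed
  obtain z0 where z0: "z0 \<in> F" using Fne by blast
  define e :: "nat \<Rightarrow> real" where "e q = (1/2)^q" for q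
  have epos: "e q > 0" for q unfolding e_def by simp
  define sq where "sq q = (SOME s. s \<in> C 0 q \<union> C 1 q)" for q
  define ab where "ab q v = (SOME ab. ab \<in> A \<and> fst ab \<in> F \<and> snd ab \<in> F \<and> d v (fst ab) < e q \<and> d v (snd ab) < e q)" for q v
  have sq_in: "sq q \<in> C 0 q \<union> C 1 q" if "C 0 q \<union> C 1 q \<noteq> {}" for q
    unfolding sq_def using that by (metis (mono_tags, lifting) ex_in_conv someI_ex)
  have ab_ok: "ab q v \<in> A \<and> fst (ab q v) \<in> F \<and> snd (ab q v) \<in> F \<and> d v (fst (ab q v)) < e q \<and> d v (snd (ab q v)) < e q"
    if vF: "v \<in> F" for q v
  proof -
    have vM: "v \<in> M" using vF FM by blast
    have "openin M.mtopology (M.mball v (e q))" by simp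
    moreover have "v \<in> M.mball v (e q)" using vM epos by simp
    ultimately have "\<exists>(a,b)\<in>A. a \<in> M.mball v (e q) \<inter> F \<and> b \<in> M.mball v (e q) \<inter> F"
      using PF vF by blast
    then obtain a b where "(a,b) \<in> A" "a \<in> M.mball v (e q) \<inter> F" "b \<in> M.mball v (e q) \<inter> F"
      by blast
    then have "\<exists>ab. ab \<in> A \<and> fst ab \<in> F \<and> snd ab \<in> F \<and> d v (fst ab) < e q \<and> d v (snd ab) < e q"
      by (intro exI[of _ "(a,b)"]) auto
    then show ?thesis unfolding ab_def by (rule someI_ex)
  qed
  define stp where "stp q h = (if C 0 q \<union> C 1 q = {} then h else
      (\<lambda>x. if sameidx Q q x (sq q) \<and> x \<in> Q q (2*q) then fst (ab q (h (sq q)))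
           else if sameidx Q q x (sq q) \<and> x \<in> Q q (2*q+1) then snd (ab q (h (sq q)))
           else h x))" for q h
  define g where "g = rec_nat (\<lambda>_. z0) stp"
  have g0: "g 0 = (\<lambda>_. z0)" and gS: "g (Suc q) = stp q (g q)" for q by (simp_all add: g_def)
  have gSe: "g (Suc q) = g q" if "C 0 q \<union> C 1 q = {}" for q
    unfolding gS stp_def if_P[OF that] by (rule refl)
  have gSq: "g (Suc q) x = (if sameidx Q q x (sq q) \<and> x \<in> Q q (2*q) then fst (ab q (g q (sq q)))
           else if sameidx Q q x (sq q) \<and> x \<in> Q q (2*q+1) then snd (ab q (g q (sq q)))
           else g q x)" if "C 0 q \<union> C 1 q \<noteq> {}" for q x
    unfolding gS stp_def if_not_P[OF that] by (rule refl)
  have inv: "(\<forall>x. g q x \<in> F) \<and> (\<forall>x y. sameidx Q q x y \<longrightarrow> g q x = g q y)" for q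
  proof (induction q)
    case 0 then show ?case using z0 g0 by simp
  next
    case (Suc q)
    then have hF: "\<And>x. g q x \<in> F" and hs: "\<And>x y. sameidx Q q x y \<Longrightarrow> g q x = g q y" by blast+
    show ?case
    proof (cases "C 0 q \<union> C 1 q = {}")
      case True
      then have eq: "g (Suc q) = g q" by (rule gSe)
      show ?thesis unfolding eq
      proof (intro conjI allI impI)
        fix x show "g q x \<in> F" by (rule hF)
      next
        fix x y assume "sameidx Q (Suc q) x y"
        then show "g q x = g q y" using hs[of x y] sameidx_Suc[of Q q x y] by simp
      qed
    next
      case False
      have abq: "fst (ab q (g q (sq q))) \<in> F" "snd (ab q (g q (sq q))) \<in> F" using ab_ok[OF hF[of "sq q"]] by simp_all
      have F1: "g (Suc q) x \<in> F" for x using abq hF[of x] unfolding gSq[OF False] by simp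
      have F2: "g (Suc q) x = g (Suc q) y" if sxy: "sameidx Q (Suc q) x y" for x y
      proof -
        have 1: "sameidx Q q x y" using sxy unfolding sameidx_Suc by (rule conjunct1)
        have 2: "x \<in> Q q p \<longleftrightarrow> y \<in> Q q p" for p using sxy unfolding sameidx_Suc by blast
        have 3: "sameidx Q q x (sq q) = sameidx Q q y (sq q)" using sameidx_trans[OF 1] .
        show ?thesis unfolding gSq[OF False] 3 hs[OF 1] 2 by (rule refl)
      qed
      show ?thesis
      proof (intro conjI allI impI)
        fix x show "g (Suc q) x \<in> F" by (rule F1)
      next
        fix x y assume "sameidx Q (Suc q) x y"
        then show "g (Suc q) x = g (Suc q) y" by (rule F2)
      qed
    qed
  qed
  have gF: "g q x \<in> F" for q x using inv by blast
  have gs: "sameidx Q q x y \<Longrightarrow> g q x = g q y" for q x y using inv by blast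
  have gM: "g q x \<in> M" for q x using gF FM by blast
  have gdist: "d (g q x) (g (Suc q) x) < e q" for q x
  proof (cases "C 0 q \<union> C 1 q = {}")
    case True then show ?thesis using gM epos unfolding gSe[OF True] by simp
  next
    case False
    have v: "g q x = g q (sq q)" if "sameidx Q q x (sq q)" using gs[OF that] .
    have ab: "d (g q (sq q)) (fst (ab q (g q (sq q)))) < e q" "d (g q (sq q)) (snd (ab q (g q (sq q)))) < e q"
      using ab_ok gF by blast+
    show ?thesis using v ab gM epos unfolding gSq[OF False] by auto
  qed
  have gkeep: "g (Suc q) x = g q x" if "x \<notin> Q q (2*q)" "x \<notin> Q q (2*q+1)" for q x
    using that gSe gSq by (cases "C 0 q \<union> C 1 q = {}") simp_all
  have gedge: "(g (Suc i) x, g (Suc i) y) \<in> A" if x: "x \<in> C 0 i" and y: "y \<in> C 1 i" for i x y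
  proof -
    have ne: "C 0 i \<union> C 1 i \<noteq> {}" using x by blast
    have s: "sq i \<in> C 0 i \<union> C 1 i" using sq_in[OF ne] .
    have sx: "sameidx Q i x (sq i)" and sy: "sameidx Q i y (sq i)" using same_C s x y by blast+
    have xO: "x \<in> Q i (2*i)" using Osmall[of i i 0] x by auto
    have yO: "y \<in> Q i (2*i+1)" using Osmall[of i i 1] y by auto
    have yO': "y \<notin> Q i (2*i)" using yO Odisj[of "2*i" "2*i+1" i] by auto
    have "g (Suc i) x = fst (ab i (g i (sq i)))" using sx xO unfolding gSq[OF ne] by simp
    moreover have "g (Suc i) y = snd (ab i (g i (sq i)))" using sy yO yO' unfolding gSq[OF ne] by simp
    moreover have "ab i (g i (sq i)) \<in> A" using ab_ok gF by blast
    ultimately show ?thesis by simp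
  qed
  have gstab: "g n x = g (Suc i) x" if x: "x \<in> C ee i" and ee: "ee < 2" and n: "Suc i \<le> n" for i x n ee
    using n
  proof (induction n rule: dec_induct)
    case base then show ?case by simp
  next
    case (step n)
    have "x \<in> Q n (2*i+ee)" using Osmall[of i n ee] x ee step(1) by auto
    moreover have "2*i+ee \<noteq> 2*n" "2*i+ee \<noteq> 2*n+1" using ee step(1) by auto
    ultimately have "x \<notin> Q n (2*n)" "x \<notin> Q n (2*n+1)" using Odisj by blast+
    then show ?case using gkeep step(3) by simp
  qed
  have nbhd: "openin XX {y \<in> topspace XX. sameidx Q q y x}" if xtop: "x \<in> topspace XX" for q x
  proof (induction q)
    case 0 then show ?case by (simp add: sameidx_def)
  next
    case (Suc q)
    have "x \<in> (\<Union>p. Q q p)" using xtop Ocov[of q] by simp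
    then obtain p where p: "x \<in> Q q p" by blast
    have "{y \<in> topspace XX. sameidx Q (Suc q) y x} = {y \<in> topspace XX. sameidx Q q y x} \<inter> Q q p"
    proof (intro set_eqI iffI)
      fix y assume "y \<in> {y \<in> topspace XX. sameidx Q (Suc q) y x}"
      then show "y \<in> {y \<in> topspace XX. sameidx Q q y x} \<inter> Q q p" using p by (simp add: sameidx_Suc)
    next
      fix y assume y: "y \<in> {y \<in> topspace XX. sameidx Q q y x} \<inter> Q q p"
      have "y \<in> Q q p' \<longleftrightarrow> x \<in> Q q p'" for p'
        using y p Odisj[of p p' q] by (cases "p = p'") auto
      then show "y \<in> {y \<in> topspace XX. sameidx Q (Suc q) y x}" using y by (simp add: sameidx_Suc)
    qed
    then show ?case using Suc.IH Oopen by (simp add: openin_Int)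
  qed
  have gcont: "continuous_map XX M.mtopology (g q)" for q
    unfolding continuous_map_def
  proof (intro conjI allI impI)
    show "g q \<in> topspace XX \<rightarrow> topspace M.mtopology" using gM by simp
    fix U assume "openin M.mtopology U"
    show "openin XX {x \<in> topspace XX. g q x \<in> U}"
    proof (subst openin_subopen, intro ballI)
      fix x assume x: "x \<in> {x \<in> topspace XX. g q x \<in> U}"
      have "{y \<in> topspace XX. sameidx Q q y x} \<subseteq> {x \<in> topspace XX. g q x \<in> U}"
        using x gs by auto
      moreover have "x \<in> {y \<in> topspace XX. sameidx Q q y x}" using x sameidx_refl by auto
      ultimately show "\<exists>T. openin XX T \<and> x \<in> T \<and> T \<subseteq> {x \<in> topspace XX. g q x \<in> U}"
        using nbhd x by blast
    qed
  qed
  have gbound: "d (g m x) (g n x) \<le> 2 * (1/2)^m - 2 * (1/2)^n" if "m \<le> n" for m n x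
    using that
  proof (induction n rule: dec_induct)
    case base then show ?case using gM by simp
  next
    case (step n)
    have "d (g m x) (g (Suc n) x) \<le> d (g m x) (g n x) + d (g n x) (g (Suc n) x)"
      using gM M.triangle by blast
    also have "\<dots> \<le> 2 * (1/2)^m - 2 * (1/2)^n + (1/2)^n"
      using step(3) gdist[of n x] unfolding e_def by linarith
    finally show ?case by simp
  qed
  have gbound2: "d (g m x) (g n x) \<le> 2 * (1/2)^N" if "N \<le> m" "N \<le> n" for m n x N
  proof -
    have "d (g m x) (g n x) \<le> 2 * (1/2)^(min m n)"
    proof (cases "m \<le> n")
      case True
      then have mn: "min m n = m" by simp
      have "(0::real) \<le> (1/2)^n" by simp
      then show ?thesis unfolding mn using gbound[OF True, of x] by linarith
    next
      case False
      then have mn: "min m n = n" by simp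
      have "(0::real) \<le> (1/2)^m" by simp
      then show ?thesis unfolding mn using gbound[of n m x] False M.commute[of "g m x" "g n x"] by linarith
    qed
    also have "\<dots> \<le> 2 * (1/2)^N" using that by (simp add: power_decreasing)
    finally show ?thesis .
  qed
  have Cauchy: "\<exists>N. \<forall>m n x. N \<le> m \<longrightarrow> N \<le> n \<longrightarrow> x \<in> topspace XX \<longrightarrow> d (g m x) (g n x) < \<epsilon>"
    if "\<epsilon> > 0" for \<epsilon>
  proof -
    have "\<exists>N. (1/2::real)^N < \<epsilon>/2" using real_arch_pow_inv[of "\<epsilon>/2" "1/2"] that by auto
    then obtain N where N: "(1/2::real)^N < \<epsilon>/2" by blast
    have "\<forall>m n x. N \<le> m \<longrightarrow> N \<le> n \<longrightarrow> x \<in> topspace XX \<longrightarrow> d (g m x) (g n x) < \<epsilon>"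
    proof (intro allI impI)
      fix m n x assume "N \<le> m" "N \<le> n"
      then have "d (g m x) (g n x) \<le> 2 * (1/2)^N" by (rule gbound2)
      then show "d (g m x) (g n x) < \<epsilon>" using N by linarith
    qed
    then show ?thesis by blast
  qed
  obtain f where fc: "continuous_map XX M.mtopology f"
    and fl: "\<And>\<epsilon>. 0 < \<epsilon> \<Longrightarrow> \<forall>\<^sub>F n in sequentially. \<forall>x\<in>topspace XX. d (g n x) (f x) < \<epsilon>"
  proof -
    have ev: "\<forall>\<^sub>F n in sequentially. continuous_map XX M.mtopology (g n)" using gcont by simp
    show ?thesis apply (rule M.continuous_map_uniformly_Cauchy_limit[OF mc ev Cauchy]) apply assumption apply (erule that) apply assumption done
  qed
  have fval: "f x = g (Suc i) x" if x: "x \<in> C ee i" and ee: "ee < 2" for x i ee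
  proof -
    have xt: "x \<in> topspace XX" using Osmall[of i i ee] x ee Oopen openin_subset by blast
    have fxM: "f x \<in> M" using fc xt unfolding continuous_map_def by auto
    have "d (g (Suc i) x) (f x) < \<epsilon>" if epos': "\<epsilon> > 0" for \<epsilon>
    proof -
      obtain N where "\<forall>n\<ge>N. \<forall>x\<in>topspace XX. d (g n x) (f x) < \<epsilon>"
        using fl[OF epos'] unfolding eventually_sequentially by blast
      then have "d (g (max N (Suc i)) x) (f x) < \<epsilon>" using xt by simp
      then show ?thesis using gstab[OF x ee, of "max N (Suc i)"] by simp
    qed
    then have "d (g (Suc i) x) (f x) = 0"
      by (metis M.nonneg less_eq_real_def not_less)
    then show ?thesis using gM fxM by simp
  qed
  have "(f x, f y) \<in> A" if "x \<in> C 0 i" "y \<in> C 1 i" for i x y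
    using fval[of x 0 i] fval[of y 1 i] gedge that by simp
  then show ?thesis using fc by blast
qed


theorem lemma4p4:
  fixes XX :: "'a topology" and X :: "'b topology"
    and C :: "nat \<Rightarrow> nat \<Rightarrow> 'a set" and A :: "('b \<times> 'b) set"
  assumes "Polish_space XX" and "XX dim_le 0"
    and "one_disjoint XX C" and "comparing XX C"
    and "Polish_space X"
    and "A \<subseteq> topspace X \<times> topspace X"
  shows "(\<exists>c :: 'b \<Rightarrow> nat.
            (\<forall>n. Delta02_in X {x \<in> topspace X. c x = n}) \<and>
            (\<forall>(x, y) \<in> A. c x \<noteq> c y))
       \<or> (\<exists>f. continuous_map XX X f \<and>
            (\<forall>i. \<forall>x \<in> C 0 i. \<forall>y \<in> C 1 i. (f x, f y) \<in> A))"
proof -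
  have mX: "metrizable_space X"
    using assms(5) unfolding Polish_space_def by (simp add: completely_metrizable_imp_metrizable_space)
  have sX: "separable_space X" using assms(5) unfolding Polish_space_def by simp
  from coloring_or_kernel[OF mX sX assms(6)] show ?thesis
  proof
    assume "\<exists>c :: 'b \<Rightarrow> nat. (\<forall>n. Delta02_in X {x \<in> topspace X. c x = n}) \<and>
            (\<forall>(x, y) \<in> A. c x \<noteq> c y)"
    then show ?thesis by (rule disjI1)
  next
    assume "\<exists>F. F \<subseteq> topspace X \<and> F \<noteq> {} \<and>
           (\<forall>x\<in>F. \<forall>U. openin X U \<and> x \<in> U \<longrightarrow> (\<exists>(a,b)\<in>A. a \<in> U \<inter> F \<and> b \<in> U \<inter> F))"
    then obtain F where F: "F \<subseteq> topspace X" "F \<noteq> {}"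
      "\<forall>x\<in>F. \<forall>U. openin X U \<and> x \<in> U \<longrightarrow> (\<exists>(a,b)\<in>A. a \<in> U \<inter> F \<and> b \<in> U \<inter> F)"
      by blast
    obtain M d where ms: "Metric_space M d" "Metric_space.mcomplete M d" "X = Metric_space.mtopology M d"
      using assms(5) unfolding Polish_space_def completely_metrizable_space_def by blast
    have FM: "F \<subseteq> M" using F(1) unfolding ms(3) Metric_space.topspace_mtopology[OF ms(1)] .
    have PF: "\<forall>x\<in>F. \<forall>U. openin (Metric_space.mtopology M d) U \<and> x \<in> U \<longrightarrow>
               (\<exists>(a,b)\<in>A. a \<in> U \<inter> F \<and> b \<in> U \<inter> F)"
      using F(3) unfolding ms(3) .
    have "\<exists>f. continuous_map XX (Metric_space.mtopology M d) f \<and>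
            (\<forall>i. \<forall>x\<in>C 0 i. \<forall>y\<in>C 1 i. (f x, f y) \<in> A)"
      by (rule build_hom[OF ms(1) ms(2) assms(4) FM F(2) PF])
    then have "\<exists>f. continuous_map XX X f \<and>
            (\<forall>i. \<forall>x\<in>C 0 i. \<forall>y\<in>C 1 i. (f x, f y) \<in> A)"
      unfolding ms(3) .
    then show ?thesis by (rule disjI2)
  qed
qed

end
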